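(* Given $\varepsilon>0$ and $q\in(1,\infty)$, the following holds for all sufficiently large $m\in\mathbb{N}$. Suppose $\mu,\nu$ are $2^{-m}$-measures with $\|\mu*\nu\|_q\ge2^{-\varepsilon m}\|\mu\|_q$. Then there exist integers $j,j'\le2\varepsilon q'm$ such that, setting \[ A=\{x:2^{-j-1}\|\mu\|_q^{q'}<\mu(x)\le2^{-j}\|\mu\|_q^{q'}\},\qquad B=\{y:2^{-j'-1}2^{-m}<\nu(y)\le2^{-j'}2^{-m}\}, \] we have: (i) $\|\mathbf{1}_A*\mathbf{1}_B\|_q\ge2^{-2\varepsilon m}\|\mathbf{1}_A\|_q\|\mathbf{1}_B\|_1$; (ii) $\|\mu|_A\|_q\ge2^{-2\varepsilon m}\|\mu\|_q$; (iii) $\nu(B)\ge2^{-2\varepsilon m}$.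
   Context: A $2^{-m}$-measure is a probability measure supported on $2^{-m}\mathbb{Z}\cap[0,1)$, viewed on the circle $\mathbb{R}/\mathbb{Z}$, where convolutions are taken. For finitely supported $f$ (measure or function), $\|f\|_q=(\sum_y f(y)^q)^{1/q}$; $q'=q/(q-1)$. *)

theory Defs
  imports Complex_Main "HOL-Library.Indicator_Function"
begin

text \<open>Points of the grid 2^{-m} Z \<inter> [0,1) on the circle R/Z are encoded by
  their numerators k < 2^m (the point k / 2^m).  Functions are nat \<Rightarrow> real,
  only values on {..<2^m} matter.\<close>

definition grid :: "nat \<Rightarrow> nat set" where
  "grid m = {..<(2::nat)^m}"

definition dyadic_measure :: "nat \<Rightarrow> (nat \<Rightarrow> real) \<Rightarrow> bool" where
  "dyadic_measure m \<mu> \<longleftrightarrow> (\<forall>x. 0 \<le> \<mu> x) \<and> (\<forall>x. x \<notin> grid m \<longrightarrow> \<mu> x = 0)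
     \<and> (\<Sum>x\<in>grid m. \<mu> x) = 1"

text \<open>Convolution on the circle: addition of grid points is addition mod 2^m.\<close>
definition conv :: "nat \<Rightarrow> (nat \<Rightarrow> real) \<Rightarrow> (nat \<Rightarrow> real) \<Rightarrow> nat \<Rightarrow> real" where
  "conv m f g x = (if x \<in> grid m
     then (\<Sum>y\<in>grid m. f y * g ((x + 2^m - y) mod 2^m)) else 0)"

definition lqnorm :: "nat \<Rightarrow> real \<Rightarrow> (nat \<Rightarrow> real) \<Rightarrow> real" where
  "lqnorm m q f = (\<Sum>y\<in>grid m. \<bar>f y\<bar> powr q) powr (1 / q)"

definition restr :: "(nat \<Rightarrow> real) \<Rightarrow> nat set \<Rightarrow> nat \<Rightarrow> real" where
  "restr \<mu> A = (\<lambda>x. if x \<in> A then \<mu> x else 0)"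

definition conj_exp :: "real \<Rightarrow> real" where
  "conj_exp q = q / (q - 1)"

end

theory Submission
  imports Defs "HOL-Analysis.Analysis" "HOL-Real_Asymp.Real_Asymp"
begin


lemma powr_convex0:
  assumes "p \<ge> (1::real)" shows "convex_on {0..} (\<lambda>x::real. x powr p)"
proof (rule convex_onI)
  fix t x y :: real assume t: "t > 0" "t < 1" and xy: "x \<in> {0..}" "y \<in> {0..}"
  show "((1 - t) *\<^sub>R x + t *\<^sub>R y) powr p \<le> (1 - t) * x powr p + t * y powr p"
  proof (cases "x = 0 \<or> y = 0")
    case False
    then have "x \<in> {0<..}" "y \<in> {0<..}" using xy by auto
    then show ?thesis using convex_onD[OF powr_convex[OF assms], of t x y] t by auto
  next
    case True
    have a: "s powr p \<le> s" if "0 \<le> s" "s \<le> 1" for s :: real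
      using powr_mono'[of 1 p s] that assms by simp
    show ?thesis
    proof (cases "x = 0")
      case True
      have "(t * y) powr p = t powr p * y powr p" using t xy by (simp add: powr_mult)
      also have "\<dots> \<le> t * y powr p" using a[of t] t by (intro mult_right_mono) auto
      finally show ?thesis using True by simp
    next
      case False
      with True have y: "y = 0" by auto
      have "((1-t) * x) powr p = (1-t) powr p * x powr p" using t xy by (simp add: powr_mult)
      also have "\<dots> \<le> (1-t) * x powr p" using a[of "1-t"] t by (intro mult_right_mono) auto
      finally show ?thesis using y by simp
    qed
  qed
qed auto

lemma jensen_powr:
  fixes w a :: "'a \<Rightarrow> real"
  assumes "finite S" "S \<noteq> {}" "q \<ge> 1" "sum w S = 1" "\<And>i. i\<in>S \<Longrightarrow> w i \<ge> 0"
    "\<And>i. i\<in>S \<Longrightarrow> a i \<ge> 0"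
  shows "(\<Sum>i\<in>S. w i * a i) powr q \<le> (\<Sum>i\<in>S. w i * a i powr q)"
  using convex_on_sum[OF assms(1,2) powr_convex0[OF assms(3)], of w a] assms by auto

lemma asy: fixes e c :: real assumes "e > 0" "c \<ge> 0"
  shows "eventually (\<lambda>x::real. 4*((c+1)*x+2)^4 \<le> 2 powr (e*x)) at_top"
  using assms by real_asymp



lemma finite_grid[simp]: "finite (grid m)" by (simp add: grid_def)
lemma grid_ne[simp]: "grid m \<noteq> {}"
proof -
  have "(0::nat) \<in> grid m" by (simp add: grid_def)
  then show ?thesis by blast
qed
lemma card_grid: "card (grid m) = 2^m" by (simp add: grid_def)

lemma tau_in: "(x + 2^m - y) mod 2^m \<in> grid m"
  by (simp add: grid_def)

lemma tau_eq: "x < (N::nat) \<Longrightarrow> y < N \<Longrightarrow> (x + N - y) mod N = (if y \<le> x then x - y else x + N - y)"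
proof -
  assume a: "x < N" "y < N"
  show ?thesis
  proof (cases "y \<le> x")
    case True
    then have "x + N - y = (x - y) + N" by simp
    then have "(x + N - y) mod N = (x - y) mod N" by simp
    also have "\<dots> = x - y" using a by simp
    finally show ?thesis using True by simp
  next
    case False then show ?thesis using a by simp
  qed
qed

lemma add_mod_eq: "z < (N::nat) \<Longrightarrow> y < N \<Longrightarrow> (z + y) mod N = (if z + y < N then z + y else z + y - N)"
  by (simp add: le_mod_geq)

lemma sum_shift_x:
  assumes "y \<in> grid m"
  shows "(\<Sum>x\<in>grid m. g ((x + 2^m - y) mod (2::nat)^m)) = (\<Sum>z\<in>grid m. g z)"
proof (rule sum.reindex_bij_witness[where i="\<lambda>z. (z + y) mod 2^m" and j="\<lambda>x. (x + 2^m - y) mod 2^m"])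
  fix x assume x: "x \<in> grid m"
  show "((x + 2 ^ m - y) mod 2 ^ m + y) mod 2 ^ m = x"
    using x assms by (auto simp: grid_def tau_eq add_mod_eq) 
  show "(x + 2^m - y) mod 2^m \<in> grid m" by (rule tau_in)
next
  fix z assume z: "z \<in> grid m"
  show "((z + y) mod 2 ^ m + 2 ^ m - y) mod 2 ^ m = z"
    using z assms by (auto simp: grid_def tau_eq add_mod_eq) 
  show "(z + y) mod 2^m \<in> grid m" by (simp add: grid_def)
qed simp

lemma sum_shift_y:
  assumes "x \<in> grid m"
  shows "(\<Sum>y\<in>grid m. g ((x + 2^m - y) mod (2::nat)^m)) = (\<Sum>z\<in>grid m. g z)"
proof (rule sum.reindex_bij_witness[where i="\<lambda>z. (x + 2^m - z) mod 2^m" and j="\<lambda>y. (x + 2^m - y) mod 2^m"])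
  fix y assume y: "y \<in> grid m"
  show "(x + 2^m - (x + 2 ^ m - y) mod 2 ^ m) mod 2 ^ m = y"
    using y assms by (auto simp: grid_def tau_eq) 
  show "(x + 2^m - y) mod 2^m \<in> grid m" by (rule tau_in)
next
  fix z assume z: "z \<in> grid m"
  show "(x + 2^m - (x + 2 ^ m - z) mod 2 ^ m) mod 2 ^ m = z"
    using z assms by (auto simp: grid_def tau_eq) 
  show "(x + 2^m - z) mod 2^m \<in> grid m" by (rule tau_in)
qed simp



lemma lqnorm_nonneg: "lqnorm m q f \<ge> 0" by (simp add: lqnorm_def)

lemma lqnorm_mono:
  assumes "q > 0" "\<And>x. x \<in> grid m \<Longrightarrow> \<bar>f x\<bar> \<le> \<bar>g x\<bar>"
  shows "lqnorm m q f \<le> lqnorm m q g"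
  unfolding lqnorm_def
  by (intro powr_mono2 sum_mono powr_mono2) (use assms in \<open>auto intro: sum_nonneg\<close>)

lemma lqnorm_scale:
  assumes "q > 0" "c \<ge> 0"
  shows "lqnorm m q (\<lambda>x. c * f x) = c * lqnorm m q f"
proof -
  have "(\<Sum>y\<in>grid m. \<bar>c * f y\<bar> powr q) = c powr q * (\<Sum>y\<in>grid m. \<bar>f y\<bar> powr q)"
    using assms by (simp add: abs_mult powr_mult sum_distrib_left)
  then have "lqnorm m q (\<lambda>x. c * f x) = (c powr q) powr (1/q) * lqnorm m q f"
    unfolding lqnorm_def using assms by (simp add: powr_mult sum_nonneg)
  also have "(c powr q) powr (1/q) = c" using assms by (simp add: powr_powr)
  finally show ?thesis .
qed

lemma conv_nonneg:
  assumes "\<And>x. f x \<ge> 0" "\<And>x. g x \<ge> 0"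
  shows "conv m f g x \<ge> 0"
  unfolding conv_def using assms by (auto intro!: sum_nonneg)

lemma conv_mono:
  assumes "\<And>x. 0 \<le> f x" "\<And>x. f x \<le> F x" "\<And>x. 0 \<le> g x" "\<And>x. g x \<le> G x"
  shows "conv m f g x \<le> conv m F G x"
  unfolding conv_def using assms by (auto intro!: sum_mono mult_mono order_trans[OF assms(1,2)])

lemma conv_scale:
  "conv m (\<lambda>x. a * f x) (\<lambda>x. b * g x) x = a * b * conv m f g x"
  unfolding conv_def by (simp add: sum_distrib_left mult_ac)

lemma conv_sum:
  assumes "finite I" "finite K"
  shows "conv m (\<lambda>y. \<Sum>i\<in>I. f i y) (\<lambda>y. \<Sum>k\<in>K. g k y) x = (\<Sum>p\<in>I \<times> K. conv m (f (fst p)) (g (snd p)) x)"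
proof (cases "x \<in> grid m")
  case True
  have "conv m (\<lambda>y. \<Sum>i\<in>I. f i y) (\<lambda>y. \<Sum>k\<in>K. g k y) x
     = (\<Sum>y\<in>grid m. \<Sum>i\<in>I. \<Sum>k\<in>K. f i y * g k ((x + 2^m - y) mod 2^m))"
    using True by (simp add: conv_def sum_product)
  also have "\<dots> = (\<Sum>i\<in>I. \<Sum>k\<in>K. \<Sum>y\<in>grid m. f i y * g k ((x + 2^m - y) mod 2^m))"
    by (subst sum.swap) (simp add: sum.swap[of _ "grid m"])
  also have "\<dots> = (\<Sum>i\<in>I. \<Sum>k\<in>K. conv m (f i) (g k) x)"
    using True by (simp add: conv_def)
  also have "\<dots> = (\<Sum>p\<in>I \<times> K. conv m (f (fst p)) (g (snd p)) x)"
    by (subst sum.cartesian_product') simp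
  finally show ?thesis .
qed (simp add: conv_def)

lemma young:
  assumes q: "q \<ge> 1" and f: "\<And>x. f x \<ge> 0" and g: "\<And>x. g x \<ge> 0"
  shows "lqnorm m q (conv m f g) \<le> lqnorm m q f * (\<Sum>z\<in>grid m. g z)"
proof -
  define G where "G = (\<Sum>z\<in>grid m. g z)"
  define t where "t = (\<lambda>x y. (x + 2^m - y) mod (2::nat)^m)"
  have G0: "G \<ge> 0" unfolding G_def using g by (simp add: sum_nonneg)
  have cx: "conv m f g x = (\<Sum>y\<in>grid m. f y * g (t x y))" if "x \<in> grid m" for x
    using that by (simp add: conv_def t_def)
  have pt: "conv m f g x powr q \<le> G powr (q - 1) * (\<Sum>y\<in>grid m. g (t x y) * f y powr q)"
    if x: "x \<in> grid m" for x
  proof (cases "G = 0")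
    case True
    have "g z = 0" if "z \<in> grid m" for z
      using True sum_nonneg_eq_0_iff[of "grid m" g] g that unfolding G_def by auto
    then have "conv m f g x = 0" using cx[OF x] by (simp add: t_def tau_in)
    moreover have "0 \<le> (\<Sum>y\<in>grid m. g (t x y) * f y powr q)"
      using g by (intro sum_nonneg mult_nonneg_nonneg) auto
    ultimately show ?thesis using q by simp
  next
    case False
    then have Gp: "G > 0" using G0 by simp
    have ws: "(\<Sum>y\<in>grid m. g (t x y) / G) = 1"
      using sum_shift_y[OF x, of g] Gp by (simp add: t_def G_def sum_divide_distrib[symmetric])
    have "conv m f g x = G * (\<Sum>y\<in>grid m. (g (t x y) / G) * f y)"
      using cx[OF x] Gp by (simp add: sum_distrib_left mult_ac)
    then have "conv m f g x powr q = G powr q * (\<Sum>y\<in>grid m. (g (t x y) / G) * f y) powr q"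
      using Gp f g by (simp add: powr_mult sum_nonneg)
    also have "\<dots> \<le> G powr q * (\<Sum>y\<in>grid m. (g (t x y) / G) * f y powr q)"
      by (intro mult_left_mono jensen_powr) (use q ws Gp f g in auto)
    also have "\<dots> = G powr (q - 1) * (\<Sum>y\<in>grid m. g (t x y) * f y powr q)"
      using Gp by (simp add: sum_distrib_left powr_diff field_simps)
    finally show ?thesis .
  qed
  have cn: "conv m f g x \<ge> 0" for x using conv_nonneg f g by blast
  have "(\<Sum>x\<in>grid m. \<bar>conv m f g x\<bar> powr q) \<le> (\<Sum>x\<in>grid m. G powr (q - 1) * (\<Sum>y\<in>grid m. g (t x y) * f y powr q))"
    using pt cn by (intro sum_mono) simp
  also have "\<dots> = G powr (q - 1) * (\<Sum>y\<in>grid m. f y powr q * (\<Sum>x\<in>grid m. g (t x y)))"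
  proof -
    have "(\<Sum>x\<in>grid m. \<Sum>y\<in>grid m. g (t x y) * f y powr q) = (\<Sum>y\<in>grid m. \<Sum>x\<in>grid m. g (t x y) * f y powr q)"
      by (rule sum.swap)
    also have "\<dots> = (\<Sum>y\<in>grid m. f y powr q * (\<Sum>x\<in>grid m. g (t x y)))"
      by (simp add: sum_distrib_left mult.commute)
    finally show ?thesis by (simp add: sum_distrib_left[symmetric])
  qed
  also have "\<dots> = G powr (q - 1) * (\<Sum>y\<in>grid m. f y powr q * G)"
    using sum_shift_x[of _ m g] by (simp add: t_def G_def)
  also have "\<dots> = G powr q * (\<Sum>y\<in>grid m. \<bar>f y\<bar> powr q)"
  proof (cases "G = 0")
    case True then show ?thesis using q by simp
  next
    case False then show ?thesis using G0 f
      by (simp add: powr_diff field_simps sum_distrib_left)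
  qed
  finally have le: "(\<Sum>x\<in>grid m. \<bar>conv m f g x\<bar> powr q) \<le> G powr q * (\<Sum>y\<in>grid m. \<bar>f y\<bar> powr q)" .
  have "lqnorm m q (conv m f g) \<le> (G powr q * (\<Sum>y\<in>grid m. \<bar>f y\<bar> powr q)) powr (1/q)"
    unfolding lqnorm_def using q by (intro powr_mono2 le) (auto intro: sum_nonneg)
  also have "\<dots> = G * lqnorm m q f"
    unfolding lqnorm_def using q G0 by (simp add: powr_mult powr_powr sum_nonneg)
  finally show ?thesis by (simp add: G_def mult_ac)
qed



lemma pigeon_norm:
  assumes q: "q \<ge> 1" and I: "finite I" "I \<noteq> {}"
    and h: "\<And>k x. k \<in> I \<Longrightarrow> h k x \<ge> 0" and F: "\<And>x. F x \<ge> 0"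
    and cov: "\<And>x. x \<in> grid m \<Longrightarrow> F x \<le> (\<Sum>k\<in>I. h k x)"
  shows "\<exists>k\<in>I. lqnorm m q F \<le> card I * lqnorm m q (h k)"
proof -
  define P where "P = real (card I)"
  have P1: "P \<ge> 1" using I by (simp add: P_def Suc_le_eq card_gt_0_iff)
  define N where "N = (\<lambda>k. \<Sum>x\<in>grid m. \<bar>h k x\<bar> powr q)"
  define M where "M = Max (N ` I)"
  have "M \<in> N ` I" unfolding M_def using I by (intro Max_in) auto
  then obtain k where k: "k \<in> I" "N k = M" by auto
  have NM: "N k' \<le> M" if "k' \<in> I" for k' using I that unfolding M_def by auto
  have pt: "F x powr q \<le> P powr (q - 1) * (\<Sum>k\<in>I. \<bar>h k x\<bar> powr q)" if x: "x \<in> grid m" for x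
  proof -
    have j: "(\<Sum>k\<in>I. (1/P) * h k x) powr q \<le> (\<Sum>k\<in>I. (1/P) * h k x powr q)"
      by (rule jensen_powr) (use q I h P1 in \<open>auto simp: P_def\<close>)
    have "F x powr q \<le> (\<Sum>k\<in>I. h k x) powr q"
      using F cov[OF x] q by (intro powr_mono2) auto
    also have "(\<Sum>k\<in>I. h k x) = P * (\<Sum>k\<in>I. (1/P) * h k x)"
      using P1 by (simp add: sum_divide_distrib[symmetric])
    also have "(P * (\<Sum>k\<in>I. (1/P) * h k x)) powr q = P powr q * (\<Sum>k\<in>I. (1/P) * h k x) powr q"
      using P1 h by (simp add: powr_mult sum_nonneg)
    also have "\<dots> \<le> P powr q * (\<Sum>k\<in>I. (1/P) * h k x powr q)"
      using j P1 by (intro mult_left_mono) auto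
    also have "\<dots> = P powr (q - 1) * (\<Sum>k\<in>I. h k x powr q)"
      using P1 by (simp add: sum_divide_distrib[symmetric] powr_diff field_simps)
    also have "(\<Sum>k\<in>I. h k x powr q) = (\<Sum>k\<in>I. \<bar>h k x\<bar> powr q)"
      using h by (intro sum.cong) auto
    finally show ?thesis .
  qed
  have "(\<Sum>x\<in>grid m. \<bar>F x\<bar> powr q) \<le> (\<Sum>x\<in>grid m. P powr (q - 1) * (\<Sum>k\<in>I. \<bar>h k x\<bar> powr q))"
    using pt F by (intro sum_mono) simp
  also have "\<dots> = P powr (q - 1) * (\<Sum>k\<in>I. N k)"
    unfolding N_def by (simp add: sum_distrib_left[symmetric] sum.swap[of _ I])
  also have "\<dots> \<le> P powr (q - 1) * (\<Sum>k'\<in>I. M)"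
    using NM by (intro mult_left_mono sum_mono) auto
  also have "\<dots> = P powr q * N k"
    using P1 k by (simp add: P_def[symmetric] powr_diff field_simps)
  finally have le: "(\<Sum>x\<in>grid m. \<bar>F x\<bar> powr q) \<le> P powr q * N k" .
  have N0: "N k \<ge> 0" unfolding N_def by (simp add: sum_nonneg)
  have "lqnorm m q F \<le> (P powr q * N k) powr (1/q)"
    unfolding lqnorm_def using q le by (intro powr_mono2) (auto intro: sum_nonneg)
  also have "\<dots> = P * lqnorm m q (h k)"
    unfolding lqnorm_def using q P1 N0 by (simp add: powr_mult powr_powr N_def)
  finally show ?thesis using k by (auto simp: P_def)
qed



lemma dm_nonneg: "dyadic_measure m \<mu> \<Longrightarrow> \<mu> x \<ge> 0" by (simp add: dyadic_measure_def)
lemma dm_le1: assumes "dyadic_measure m \<mu>" shows "\<mu> x \<le> 1"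
proof (cases "x \<in> grid m")
  case True
  have "\<mu> x \<le> (\<Sum>y\<in>grid m. \<mu> y)"
    using assms True by (intro member_le_sum) (auto simp: dyadic_measure_def)
  then show ?thesis using assms by (simp add: dyadic_measure_def)
qed (use assms in \<open>auto simp: dyadic_measure_def\<close>)

lemma lqnorm_nonneg_fun: "(\<And>x. f x \<ge> 0) \<Longrightarrow> lqnorm m q f = (\<Sum>y\<in>grid m. f y powr q) powr (1/q)"
  by (simp add: lqnorm_def)

lemma K_lower:
  assumes dm: "dyadic_measure m \<mu>" and q: "q > 1"
  shows "lqnorm m q \<mu> powr conj_exp q \<ge> 2 powr (- real m)"
proof -
  define N :: real where "N = 2^m"
  have N1: "N \<ge> 1" by (simp add: N_def)
  define S where "S = (\<Sum>y\<in>grid m. \<mu> y powr q)"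
  have j: "(\<Sum>y\<in>grid m. (1/N) * \<mu> y) powr q \<le> (\<Sum>y\<in>grid m. (1/N) * \<mu> y powr q)"
    by (rule jensen_powr) (use q N1 dm in \<open>auto simp: card_grid N_def dm_nonneg\<close>)
  have s1: "(\<Sum>y\<in>grid m. \<mu> y) = 1" using dm by (simp add: dyadic_measure_def)
  have "(1/N) powr q \<le> S / N"
    using j by (simp add: sum_distrib_left[symmetric] s1 S_def sum_divide_distrib[symmetric])
  then have "N * (1/N) powr q \<le> S" using N1 by (simp add: field_simps)
  moreover have "N * (1/N) powr q = N powr (1 - q)"
    using N1 by (simp add: powr_divide powr_diff)
  ultimately have SN: "N powr (1 - q) \<le> S" by simp
  have "lqnorm m q \<mu> powr conj_exp q = S powr (1/(q-1))"
    using q unfolding lqnorm_nonneg_fun[OF dm_nonneg[OF dm]] S_def conj_exp_def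
    by (simp add: powr_powr)
  also have "\<dots> \<ge> (N powr (1 - q)) powr (1/(q-1))"
    using SN q by (intro powr_mono2) auto
  finally have "lqnorm m q \<mu> powr conj_exp q \<ge> N powr ((1 - q) * (1/(q-1)))" by (simp add: powr_powr)
  moreover have "(1 - q) * (1/(q-1)) = -1" using q by (simp add: field_simps)
  moreover have "N powr (-1) = 2 powr (- real m)"
    by (simp add: N_def powr_realpow[symmetric] powr_powr powr_minus_divide)
  ultimately show ?thesis by simp
qed

lemma tail_bound:
  assumes dm: "dyadic_measure m \<mu>" and q: "q > 1" and th: "\<theta> \<ge> 0"
  shows "lqnorm m q (restr \<mu> {x\<in>grid m. \<mu> x \<le> \<theta>}) \<le> \<theta> powr ((q - 1) / q)"
proof -
  let ?S = "{x\<in>grid m. \<mu> x \<le> \<theta>}"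
  have pt: "\<bar>restr \<mu> ?S x\<bar> powr q \<le> \<theta> powr (q - 1) * \<mu> x" if "x \<in> grid m" for x
  proof (cases "x \<in> ?S \<and> \<mu> x > 0")
    case True
    have "\<mu> x powr q = \<mu> x powr (q - 1) * \<mu> x" using True by (simp add: powr_diff)
    also have "\<dots> \<le> \<theta> powr (q - 1) * \<mu> x"
      using True q by (intro mult_right_mono powr_mono2) auto
    finally show ?thesis using True by (simp add: restr_def)
  next
    case False
    then show ?thesis using dm_nonneg[OF dm, of x] th by (auto simp: restr_def)
  qed
  have "(\<Sum>x\<in>grid m. \<bar>restr \<mu> ?S x\<bar> powr q) \<le> (\<Sum>x\<in>grid m. \<theta> powr (q - 1) * \<mu> x)"
    using pt by (intro sum_mono) auto
  also have "\<dots> = \<theta> powr (q - 1)" using dm by (simp add: sum_distrib_left[symmetric] dyadic_measure_def)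
  finally have le: "(\<Sum>x\<in>grid m. \<bar>restr \<mu> ?S x\<bar> powr q) \<le> \<theta> powr (q - 1)" .
  have "lqnorm m q (restr \<mu> ?S) \<le> (\<theta> powr (q - 1)) powr (1/q)"
    unfolding lqnorm_def using le q by (intro powr_mono2) (auto intro: sum_nonneg)
  also have "\<dots> = \<theta> powr ((q - 1) / q)" by (simp add: powr_powr)
  finally show ?thesis .
qed

lemma level_cover:
  fixes K v :: real and J :: int
  assumes K: "K > 0" "K \<ge> 2 powr (- real m)" and v: "0 < v" "v \<le> 1" and big: "2 powr (- J - 1) * K < v"
  shows "\<exists>j::int. - int m \<le> j \<and> j \<le> J \<and> 2 powr (- j - 1) * K < v \<and> v \<le> 2 powr (- j) * K"
proof -
  define L where "L = log 2 (K / v)"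
  define j where "j = \<lfloor>L\<rfloor>"
  have pL: "2 powr L = K / v" using K v by (simp add: L_def)
  have jL: "j \<le> L" "L < j + 1" unfolding j_def by linarith+
  have "K / v \<ge> K" using K v by (simp add: field_simps mult_left_le)
  then have "L \<ge> - real m" unfolding L_def using K v
    by (subst le_log_iff) (auto simp: powr_minus)
  then have j1: "- int m \<le> j" unfolding j_def by linarith
  have "K / v < 2 powr (J + 1)"
  proof -
    have "K < v * 2 powr (J + 1)"
      using big by (simp add: powr_diff powr_minus field_simps powr_add)
    then show ?thesis using v by (simp add: field_simps)
  qed
  then have "L < J + 1" using pL by (metis powr_less_cancel_iff one_less_numeral_iff semiring_norm(76))
  then have j2: "j \<le> J" unfolding j_def by linarith
  have a: "2 powr j \<le> K / v" using jL pL by (metis powr_le_cancel_iff one_less_numeral_iff semiring_norm(76))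
  have b: "K / v < 2 powr (j + 1)" using jL pL by (metis powr_less_cancel_iff one_less_numeral_iff semiring_norm(76))
  have "v \<le> 2 powr (- j) * K" using a v by (simp add: powr_minus field_simps)
  moreover have "2 powr (- j - 1) * K < v"
  proof -
    have "- j - 1 = - (j + 1)" by simp
    moreover have "2 powr real_of_int (- (j + 1)) = 1 / 2 powr real_of_int (j + 1)"
      by (simp only: of_int_minus powr_minus_divide)
    ultimately have e: "2 powr (- j - 1) = 1 / 2 powr (j + 1)" by simp
    have tp: "2 powr (j+1) > (0::real)" by simp
    have "K < 2 powr (j+1) * v" using b v by (simp add: pos_divide_less_eq mult.commute)
    then have "K / 2 powr (j+1) < v" using tp by (simp add: pos_divide_less_eq mult.commute)
    then show ?thesis using e by simp
  qed
  ultimately show ?thesis using j1 j2 by blast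
qed



lemma cover_helper:
  assumes "finite I" "j \<in> I" "x \<in> S j" "\<And>x. f x \<ge> 0"
  shows "f x \<le> (\<Sum>i\<in>I. restr f (S i) x)"
proof -
  have "f x = restr f (S j) x" using assms by (simp add: restr_def)
  also have "\<dots> \<le> (\<Sum>i\<in>I. restr f (S i) x)"
    using assms by (intro member_le_sum) (auto simp: restr_def)
  finally show ?thesis .
qed

lemma restr_nonneg: "(\<And>x. f x \<ge> 0) \<Longrightarrow> restr f S x \<ge> 0" by (simp add: restr_def)

lemma cover_all:
  fixes K :: real and J :: int
  assumes dm: "dyadic_measure m f" and K: "K > 0" "K \<ge> 2 powr (- real m)" and J: "J \<ge> 0"
  defines "P \<equiv> (\<lambda>j::int. if j \<le> J then {x\<in>grid m. 2 powr (- j - 1) * K < f x \<and> f x \<le> 2 powr (- j) * K}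
                       else {x\<in>grid m. f x \<le> 2 powr (- J - 1) * K})"
  shows "f x \<le> (\<Sum>j\<in>{- int m..J+1}. restr f (P j) x)"
proof -
  have fn: "\<And>x. f x \<ge> 0" using dm by (rule dm_nonneg)
  show ?thesis
  proof (cases "x \<in> grid m \<and> f x > 0")
    case False
    then have "f x = 0" using dm fn[of x] by (auto simp: dyadic_measure_def)
    then show ?thesis using fn by (simp add: sum_nonneg restr_nonneg)
  next
    case True
    show ?thesis
    proof (cases "f x \<le> 2 powr (- J - 1) * K")
      case True2: True
      show ?thesis by (rule cover_helper[where j="J+1"]) (use True True2 J fn in \<open>auto simp: P_def\<close>)
    next
      case False
      then obtain j where j: "- int m \<le> j" "j \<le> J" "2 powr (- j - 1) * K < f x" "f x \<le> 2 powr (- j) * K"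
        using level_cover[OF K, of "f x" J] True dm_le1[OF dm, of x] by auto
      show ?thesis by (rule cover_helper[where j=j]) (use True j J fn in \<open>auto simp: P_def\<close>)
    qed
  qed
qed

lemma sum_restr: "S \<subseteq> grid m \<Longrightarrow> (\<Sum>x\<in>grid m. restr f S x) = (\<Sum>x\<in>S. f x)"
  unfolding restr_def by (simp add: sum.inter_restrict[symmetric] Int_absorb1)

lemma lqnorm_restr_le: "q > 0 \<Longrightarrow> lqnorm m q (restr f S) \<le> lqnorm m q f"
  by (rule lqnorm_mono) (auto simp: restr_def)

lemma lqnorm_one_ind: "B \<subseteq> grid m \<Longrightarrow> lqnorm m 1 (indicator B) = real (card B)"
proof -
  assume B: "B \<subseteq> grid m"
  have "lqnorm m 1 (indicator B) = (\<Sum>y\<in>grid m. indicator B y)"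
    unfolding lqnorm_def by (simp add: sum_nonneg)
  also have "\<dots> = (\<Sum>y\<in>grid m. restr (\<lambda>_. 1) B y)"
    by (intro sum.cong) (auto simp: restr_def indicator_def)
  also have "\<dots> = real (card B)" using B by (simp add: sum_restr)
  finally show ?thesis .
qed

lemma core:
  fixes \<epsilon> q :: real and m :: nat and \<mu> \<nu> :: "nat \<Rightarrow> real"
  assumes eps: "\<epsilon> > 0" and q: "q > 1"
    and big: "4 * ((2 * \<epsilon> * conj_exp q + 1) * real m + 2) ^ 4 \<le> 2 powr (\<epsilon> * real m)"
    and dmu: "dyadic_measure m \<mu>" and dnu: "dyadic_measure m \<nu>"
    and hyp: "lqnorm m q (conv m \<mu> \<nu>) \<ge> 2 powr (- \<epsilon> * m) * lqnorm m q \<mu>"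
  shows "\<exists>(j::int) (j'::int). j \<le> 2 * \<epsilon> * conj_exp q * m \<and> j' \<le> 2 * \<epsilon> * conj_exp q * m \<and>
      (let A = {x\<in>grid m. 2 powr (- j - 1) * lqnorm m q \<mu> powr conj_exp q < \<mu> x \<and>
                          \<mu> x \<le> 2 powr (- j) * lqnorm m q \<mu> powr conj_exp q};
           B = {y\<in>grid m. 2 powr (- j' - 1) * 2 powr (- real m) < \<nu> y \<and>
                          \<nu> y \<le> 2 powr (- j') * 2 powr (- real m)}
       in lqnorm m q (conv m (indicator A) (indicator B))
            \<ge> 2 powr (- 2 * \<epsilon> * m) * lqnorm m q (indicator A) * lqnorm m 1 (indicator B)
          \<and> lqnorm m q (restr \<mu> A) \<ge> 2 powr (- 2 * \<epsilon> * m) * lqnorm m q \<mu>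
          \<and> (\<Sum>y\<in>B. \<nu> y) \<ge> 2 powr (- 2 * \<epsilon> * m))"
proof -
  define q' where "q' = conj_exp q"
  have q'1: "q' > 1" using q by (simp add: q'_def conj_exp_def field_simps)
  define c where "c = 2 * \<epsilon> * q'"
  have c0: "c \<ge> 0" using eps q'1 by (simp add: c_def)
  define J where "J = \<lfloor>c * real m\<rfloor>"
  have J0: "J \<ge> 0" using c0 by (simp add: J_def)
  have Jc: "J \<le> c * m" "c * m < J + 1" unfolding J_def by linarith+
  define c0n where "c0n = lqnorm m q \<mu>"
  define K where "K = c0n powr q'"
  define Kn :: real where "Kn = 2 powr (- real m)"
  have Kl: "K \<ge> 2 powr (- real m)" using K_lower[OF dmu q] by (simp add: K_def c0n_def q'_def)
  have Kp: "K > 0" using Kl by (smt (verit) powr_gt_zero)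
  have c0p: "c0n > 0" using Kp unfolding K_def using lqnorm_nonneg[of m q \<mu>]
    by (metis c0n_def less_eq_real_def powr_0 zero_less_iff_neq_zero) 
  have Knp: "Kn > 0" by (simp add: Kn_def)
  define Pm where "Pm = (\<lambda>j::int. if j \<le> J then {x\<in>grid m. 2 powr (- j - 1) * K < \<mu> x \<and> \<mu> x \<le> 2 powr (- j) * K}
                       else {x\<in>grid m. \<mu> x \<le> 2 powr (- J - 1) * K})"
  define Pn where "Pn = (\<lambda>j::int. if j \<le> J then {x\<in>grid m. 2 powr (- j - 1) * Kn < \<nu> x \<and> \<nu> x \<le> 2 powr (- j) * Kn}
                       else {x\<in>grid m. \<nu> x \<le> 2 powr (- J - 1) * Kn})"
  define I where "I = {- int m..J+1}"
  have covm: "\<mu> x \<le> (\<Sum>j\<in>I. restr \<mu> (Pm j) x)" for x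
    unfolding I_def Pm_def by (rule cover_all[OF dmu Kp Kl J0])
  have covn: "\<nu> x \<le> (\<Sum>j\<in>I. restr \<nu> (Pn j) x)" for x
    unfolding I_def Pn_def by (rule cover_all[OF dnu Knp _ J0]) (simp add: Kn_def)
  have mun: "\<And>x. \<mu> x \<ge> 0" using dmu by (rule dm_nonneg)
  have nun: "\<And>x. \<nu> x \<ge> 0" using dnu by (rule dm_nonneg)
  define h where "h = (\<lambda>p::int\<times>int. conv m (restr \<mu> (Pm (fst p))) (restr \<nu> (Pn (snd p))))"
  have finI: "finite I" "I \<noteq> {}" using J0 by (auto simp: I_def)
  have Fcov: "conv m \<mu> \<nu> x \<le> (\<Sum>p\<in>I \<times> I. h p x)" for x
  proof -
    have "conv m \<mu> \<nu> x \<le> conv m (\<lambda>y. \<Sum>j\<in>I. restr \<mu> (Pm j) y) (\<lambda>y. \<Sum>j\<in>I. restr \<nu> (Pn j) y) x"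
      by (rule conv_mono) (use mun nun covm covn in auto)
    also have "\<dots> = (\<Sum>p\<in>I \<times> I. h p x)" unfolding h_def by (rule conv_sum[OF finI(1) finI(1)])
    finally show ?thesis .
  qed
  have hn: "h p x \<ge> 0" for p x unfolding h_def by (rule conv_nonneg) (auto intro: restr_nonneg mun nun)
  obtain p where p: "p \<in> I \<times> I" and pb: "lqnorm m q (conv m \<mu> \<nu>) \<le> card (I \<times> I) * lqnorm m q (h p)"
    using pigeon_norm[of q "I \<times> I" h "conv m \<mu> \<nu>" m] q finI hn Fcov conv_nonneg[OF mun nun] by auto
  define P where "P = real (card (I \<times> I))"
  have cI: "real (card I) \<ge> 1" using finI by (simp add: Suc_le_eq card_gt_0_iff)
  have P1: "P \<ge> 1" using mult_mono[OF cI cI] by (simp add: P_def card_cartesian_product)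
  have cardI: "card I = nat (J + 1 + int m + 1)" by (simp add: I_def)
  have "P = (real_of_int J + m + 2)^2" using J0 unfolding P_def card_cartesian_product cardI
    by (simp add: power2_eq_square algebra_simps)
  also have "\<dots> \<le> ((c + 1) * m + 2)^2" using Jc J0 by (intro power_mono) (auto simp: algebra_simps)
  finally have Pc: "P \<le> ((c + 1) * m + 2)^2" .
  define E where "E = 2 powr (\<epsilon> * real m)"
  have Ep: "E > 0" by (simp add: E_def)
  have "4 * P^2 \<le> 4 * (((c + 1) * m + 2)^2)^2" using Pc P1 by (intro mult_left_mono power_mono) auto
  also have "\<dots> \<le> E" using big by (simp add: E_def c_def q'_def power_mult[symmetric])
  finally have PE2: "4 * P^2 \<le> E" .
  have "P \<le> P^2" using P1 mult_left_mono[of 1 P P] by (simp add: power2_eq_square)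
  then have PE: "4 * P \<le> E" using PE2 by linarith
  have e1: "2 powr (- \<epsilon> * m) = 1 / E" by (simp add: E_def powr_minus_divide[symmetric])
  have e2: "2 powr (- 2 * \<epsilon> * m) = 1 / E^2"
    by (simp add: E_def powr_minus_divide[symmetric] power2_eq_square powr_add[symmetric] mult.assoc)
  define T where "T = c0n / (E * P)"
  have hT: "lqnorm m q (h p) \<ge> T"
  proof -
    have "c0n / E \<le> P * lqnorm m q (h p)" using hyp pb e1 by (simp add: c0n_def P_def)
    then show ?thesis using P1 Ep by (simp add: T_def field_simps)
  qed
  have T2: "T \<ge> 4 * c0n / E^2"
  proof -
    have "4 * c0n * P \<le> c0n * E" using PE c0p by (simp add: mult_left_mono mult.commute)
    then show ?thesis using P1 Ep c0p by (simp add: T_def field_simps power2_eq_square)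
  qed
  obtain j j' where jj: "p = (j, j')" by (cases p)
  have jI: "j \<in> I" "j' \<in> I" using p jj by auto
  have sub: "Pm i \<subseteq> grid m" "Pn i \<subseteq> grid m" for i by (auto simp: Pm_def Pn_def)
  define mass where "mass = (\<Sum>x\<in>Pn j'. \<nu> x)"
  have mass1: "mass \<le> 1"
  proof -
    have "mass \<le> (\<Sum>x\<in>grid m. \<nu> x)" unfolding mass_def using sub nun by (intro sum_mono2) auto
    then show ?thesis using dnu by (simp add: dyadic_measure_def)
  qed
  have mass0: "mass \<ge> 0" unfolding mass_def using nun by (simp add: sum_nonneg)
  define LA where "LA = lqnorm m q (restr \<mu> (Pm j))"
  have LA0: "LA \<ge> 0" by (simp add: LA_def lqnorm_nonneg)
  have LAc: "LA \<le> c0n" unfolding LA_def c0n_def using q by (intro lqnorm_restr_le) auto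
  have Y: "lqnorm m q (h p) \<le> LA * mass"
    using young[of q "restr \<mu> (Pm j)" "restr \<nu> (Pn j')" m] q mun nun
    by (simp add: h_def jj LA_def mass_def sum_restr[OF sub(2)] restr_nonneg)
  have JJ: "c * real m < real_of_int J + 1" using Jc by simp
  have jJ: "j \<le> J"
  proof (rule ccontr)
    assume "\<not> j \<le> J"
    then have "j = J + 1" using jI by (auto simp: I_def)
    then have PmJ: "Pm j = {x\<in>grid m. \<mu> x \<le> 2 powr (- J - 1) * K}" by (simp add: Pm_def)
    define \<theta> where "\<theta> = 2 powr (- J - 1) * K"
    have "LA \<le> \<theta> powr ((q - 1) / q)" unfolding LA_def PmJ \<theta>_def[symmetric]
      by (rule tail_bound[OF dmu q]) (use Kp in \<open>simp add: \<theta>_def\<close>)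
    also have "\<theta> powr ((q - 1) / q) = 2 powr ((- J - 1) * ((q - 1) / q)) * c0n"
    proof -
      have "K powr ((q - 1) / q) = c0n powr (q' * ((q - 1) / q))" by (simp add: K_def powr_powr)
      also have "q' * ((q - 1) / q) = 1" using q by (simp add: q'_def conj_exp_def field_simps)
      finally have "K powr ((q - 1) / q) = c0n" using c0p by simp
      then show ?thesis by (simp add: \<theta>_def powr_mult powr_powr)
    qed
    also have "\<dots> < (1 / E^2) * c0n"
    proof -
      have "(- J - 1) * ((q - 1) / q) < - 2 * \<epsilon> * m"
      proof -
        have f1: "c * real m * ((q - 1) / q) = 2 * \<epsilon> * m" using q
          by (simp add: c_def q'_def conj_exp_def field_simps)
        have f2: "c * real m * ((q - 1) / q) < (real_of_int J + 1) * ((q - 1) / q)"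
          using JJ q by (intro mult_strict_right_mono) auto
        have f3: "real_of_int (- J - 1) * ((q-1)/q) = - ((real_of_int J + 1) * ((q-1)/q))"
          by (subst mult_minus_left[symmetric]) simp
        have f4: "- 2 * \<epsilon> * real m = - (2 * \<epsilon> * real m)" by simp
        have "2 * \<epsilon> * real m < (real_of_int J + 1) * ((q-1)/q)" using f1 f2 by simp
        then show ?thesis unfolding f3 f4 by simp
      qed
      then have "2 powr ((- J - 1) * ((q - 1) / q)) < 2 powr (- 2 * \<epsilon> * m)"
        by (intro powr_less_mono) auto
      then have "2 powr ((- J - 1) * ((q - 1) / q)) < 1 / E^2" unfolding e2 .
      then show ?thesis using c0p by (intro mult_strict_right_mono) auto
    qed
    finally have "LA < c0n / E^2" by simp
    moreover have "lqnorm m q (h p) \<le> LA" using Y mass1 LA0 mass0 by (smt (verit) mult_left_le)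
    moreover have "c0n / E^2 \<le> T" using T2 c0p Ep by (simp add: field_simps)
    ultimately show False using hT by linarith
  qed
  have jJ': "j' \<le> J"
  proof (rule ccontr)
    assume "\<not> j' \<le> J"
    then have "j' = J + 1" using jI by (auto simp: I_def)
    then have PnJ: "Pn j' = {x\<in>grid m. \<nu> x \<le> 2 powr (- J - 1) * Kn}" by (simp add: Pn_def)
    have "mass \<le> (\<Sum>x\<in>Pn j'. 2 powr (- J - 1) * Kn)" unfolding mass_def using PnJ by (intro sum_mono) auto
    also have "\<dots> = card (Pn j') * (2 powr (- J - 1) * Kn)" by simp
    also have "\<dots> \<le> 2^m * (2 powr (- J - 1) * Kn)"
    proof -
      have "card (Pn j') \<le> card (grid m)" using sub by (intro card_mono) auto
      then have "real (card (Pn j')) \<le> 2^m" by (simp add: card_grid)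
      then show ?thesis using Knp by (intro mult_right_mono) auto
    qed
    also have "\<dots> = 2 powr (- J - 1)"
      by (simp add: Kn_def powr_minus_divide powr_realpow[symmetric])
    also have "\<dots> < 1 / E^2"
    proof -
      have "2 * \<epsilon> * m \<le> c * m" using eps q'1 by (intro mult_right_mono) (auto simp: c_def)
      then have "- J - 1 < - 2 * \<epsilon> * m" using JJ by simp
      then have "2 powr (- J - 1) < 2 powr (- 2 * \<epsilon> * m)" by (intro powr_less_mono) auto
      then show ?thesis unfolding e2 .
    qed
    finally have "mass < 1 / E^2" .
    then have "LA * mass \<le> c0n * (1 / E^2)" using LAc LA0 mass0 by (intro mult_mono) auto
    moreover have "c0n * (1/E^2) < T" using T2 c0p Ep by (simp add: field_simps)
    moreover note Y hT
    ultimately show False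
      using \<open>mass < 1 / E^2\<close> LA0 c0p mult_strict_left_mono[of mass "1/E^2" c0n] mult_right_mono[OF LAc mass0]
      by linarith
  qed

  define A where "A = {x\<in>grid m. 2 powr (- j - 1) * lqnorm m q \<mu> powr conj_exp q < \<mu> x \<and>
                          \<mu> x \<le> 2 powr (- j) * lqnorm m q \<mu> powr conj_exp q}"
  define B where "B = {y\<in>grid m. 2 powr (- j' - 1) * 2 powr (- real m) < \<nu> y \<and>
                          \<nu> y \<le> 2 powr (- j') * 2 powr (- real m)}"
  define A1 where "A1 = {x\<in>grid m. 2 powr (- real_of_int j - 1) * lqnorm m q \<mu> powr conj_exp q < \<mu> x \<and>
                          \<mu> x \<le> 2 powr (- real_of_int j) * lqnorm m q \<mu> powr conj_exp q}"
  define B1 where "B1 = {y\<in>grid m. 2 powr (- real_of_int j' - 1) * 2 powr (- real m) < \<nu> y \<and>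
                          \<nu> y \<le> 2 powr (- real_of_int j') * 2 powr (- real m)}"
  have AA: "A = A1" unfolding A_def A1_def by simp
  have BB: "B = B1" unfolding B_def B1_def by simp
  have PmA: "Pm j = A" using jJ by (simp add: Pm_def A_def K_def c0n_def q'_def)
  have PnB: "Pn j' = B" using jJ' by (simp add: Pn_def B_def Kn_def)
  define a where "a = 2 powr (- j) * K"
  define b where "b = 2 powr (- j') * Kn"
  have ap: "a > 0" using Kp by (simp add: a_def)
  have bp: "b > 0" using Knp by (simp add: b_def)
  have ha: "2 powr (- j - 1) * K = a / 2" unfolding a_def by (simp add: powr_diff)
  have hb: "2 powr (- j' - 1) * Kn = b / 2" unfolding b_def by (simp add: powr_diff)
  have Kdef': "lqnorm m q \<mu> powr conj_exp q = K" by (simp add: K_def c0n_def q'_def)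
  have Aeq: "A = {x\<in>grid m. a / 2 < \<mu> x \<and> \<mu> x \<le> a}"
    by (simp only: A_def Kdef' ha a_def[symmetric])
  have Beq: "B = {x\<in>grid m. b / 2 < \<nu> x \<and> \<nu> x \<le> b}"
    by (simp only: B_def Kn_def[symmetric] hb b_def[symmetric])
  have Asub: "A \<subseteq> grid m" and Bsub: "B \<subseteq> grid m" by (auto simp: Aeq Beq)
  have hpA: "h p = conv m (restr \<mu> A) (restr \<nu> B)" by (simp add: h_def jj PmA PnB)
  have ubA: "restr \<mu> A x \<le> a * indicator A x" for x by (auto simp: restr_def Aeq)
  have ubB: "restr \<nu> B x \<le> b * indicator B x" for x by (auto simp: restr_def Beq)
  have lbA: "a / 2 * indicator A x \<le> restr \<mu> A x" for x by (auto simp: restr_def Aeq)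
  define LC where "LC = lqnorm m q (conv m (indicator A) (indicator B))"
  define LIA where "LIA = lqnorm m q (indicator A)"
  define cB where "cB = real (card B)"
  have LC0: "LC \<ge> 0" "LIA \<ge> 0" "cB \<ge> 0" by (simp_all add: LC_def LIA_def cB_def lqnorm_nonneg)
  have L1: "lqnorm m q (h p) \<le> a * b * LC"
  proof -
    have "h p x \<le> a * b * conv m (indicator A) (indicator B) x" for x
    proof -
      have "h p x \<le> conv m (\<lambda>x. a * indicator A x) (\<lambda>x. b * indicator B x) x"
        unfolding hpA by (rule conv_mono) (use ubA ubB mun nun in \<open>auto intro: restr_nonneg\<close>)
      then show ?thesis by (simp add: conv_scale)
    qed
    then have "lqnorm m q (h p) \<le> lqnorm m q (\<lambda>x. (a * b) * conv m (indicator A) (indicator B) x)"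
      using q hn by (intro lqnorm_mono) (auto simp: abs_of_nonneg intro: order_trans[OF _ abs_ge_self])
    also have "\<dots> = a * b * LC" unfolding LC_def using q ap bp by (intro lqnorm_scale) auto
    finally show ?thesis .
  qed
  have L2: "a * LIA \<le> 2 * c0n"
  proof -
    have "a / 2 * LIA = lqnorm m q (\<lambda>x. a / 2 * indicator A x)"
      unfolding LIA_def using q ap by (intro lqnorm_scale[symmetric]) auto
    also have "\<dots> \<le> LA" unfolding LA_def PmA using q lbA ap restr_nonneg[OF mun]
      by (intro lqnorm_mono) (auto simp: abs_of_nonneg)
    finally show ?thesis using LAc by simp
  qed
  have L3: "b * cB \<le> 2"
  proof -
    have "b / 2 * cB = (\<Sum>x\<in>B. b / 2)" by (simp add: cB_def)
    also have "\<dots> \<le> (\<Sum>x\<in>B. \<nu> x)" by (intro sum_mono) (auto simp: Beq)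
    also have "\<dots> = mass" by (simp add: mass_def PnB)
    finally show ?thesis using mass1 by simp
  qed
  have hT4: "4 * c0n / E^2 \<le> lqnorm m q (h p)" using hT T2 by simp
  have goal1: "1 / E^2 * LIA * cB \<le> LC"
  proof -
    have "(a * LIA) * (b * cB) \<le> (2 * c0n) * 2"
      by (rule mult_mono[OF L2 L3]) (use bp LC0 c0p in auto)
    then have "1 / E^2 * LIA * cB * (a * b) \<le> 4 * c0n / E^2"
      using Ep by (simp add: field_simps)
    also have "\<dots> \<le> LC * (a * b)" using hT4 L1 by (simp add: mult.commute)
    finally have "1 / E^2 * LIA * cB * (a * b) \<le> LC * (a * b)" .
    moreover have "a * b > 0" using ap bp by simp
    ultimately show ?thesis using mult_le_cancel_right_pos by blast
  qed
  have hLA: "lqnorm m q (h p) \<le> LA" using Y mass1 LA0 mass0 by (smt (verit) mult_left_le)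
  have goal2: "1 / E^2 * c0n \<le> LA"
  proof -
    have f2: "lqnorm m q (h p) * E^2 \<le> LA * E^2" by (rule mult_right_mono[OF hLA]) simp
    have f1: "4 * c0n \<le> lqnorm m q (h p) * E^2" using hT4 Ep by (simp add: field_simps)
    have "c0n \<le> LA * E^2" using f1 f2 c0p by linarith
    then show ?thesis using Ep by (simp add: field_simps)
  qed
  have goal3: "1 / E^2 \<le> mass"
  proof -
    have "4 * c0n / E^2 \<le> c0n * mass" using hT4 Y mult_right_mono[OF LAc mass0] by linarith
    then have "c0n * (1 / E^2) \<le> c0n * mass" using c0p Ep by (simp add: field_simps)
    then show ?thesis using c0p mult_le_cancel_left_pos by blast
  qed
  have jb: "real_of_int j \<le> 2 * \<epsilon> * conj_exp q * m" "real_of_int j' \<le> 2 * \<epsilon> * conj_exp q * m"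
    using jJ jJ' Jc by (simp_all add: c_def q'_def)
  have G1: "lqnorm m q (conv m (indicator A) (indicator B))
            \<ge> 2 powr (- 2 * \<epsilon> * m) * lqnorm m q (indicator A) * lqnorm m 1 (indicator B)"
      using goal1 unfolding e2 by (simp add: lqnorm_one_ind[OF Bsub] LC_def LIA_def cB_def)
  have G2: "lqnorm m q (restr \<mu> A) \<ge> 2 powr (- 2 * \<epsilon> * m) * lqnorm m q \<mu>"
      using goal2 unfolding e2 by (simp add: LA_def PmA c0n_def)
  have G3: "(\<Sum>y\<in>B. \<nu> y) \<ge> 2 powr (- 2 * \<epsilon> * m)"
      using goal3 unfolding e2 by (simp add: mass_def PnB)
  show ?thesis
    apply (rule exI[of _ j], rule exI[of _ j'])
    using jb G1 G2 G3 unfolding AA BB unfolding Let_def A1_def B1_def by blast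
qed



theorem mainTheorem8:
  fixes \<epsilon> q :: real
  assumes "\<epsilon> > 0" and "q > 1"
  shows "\<exists>M::nat. \<forall>m\<ge>M. \<forall>\<mu> \<nu>.
    dyadic_measure m \<mu> \<and> dyadic_measure m \<nu> \<and>
    lqnorm m q (conv m \<mu> \<nu>) \<ge> 2 powr (- \<epsilon> * m) * lqnorm m q \<mu> \<longrightarrow>
    (\<exists>(j::int) (j'::int). j \<le> 2 * \<epsilon> * conj_exp q * m \<and> j' \<le> 2 * \<epsilon> * conj_exp q * m \<and>
      (let A = {x\<in>grid m. 2 powr (- j - 1) * lqnorm m q \<mu> powr conj_exp q < \<mu> x \<and>
                          \<mu> x \<le> 2 powr (- j) * lqnorm m q \<mu> powr conj_exp q};
           B = {y\<in>grid m. 2 powr (- j' - 1) * 2 powr (- real m) < \<nu> y \<and>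
                          \<nu> y \<le> 2 powr (- j') * 2 powr (- real m)}
       in lqnorm m q (conv m (indicator A) (indicator B))
            \<ge> 2 powr (- 2 * \<epsilon> * m) * lqnorm m q (indicator A) * lqnorm m 1 (indicator B)
          \<and> lqnorm m q (restr \<mu> A) \<ge> 2 powr (- 2 * \<epsilon> * m) * lqnorm m q \<mu>
          \<and> (\<Sum>y\<in>B. \<nu> y) \<ge> 2 powr (- 2 * \<epsilon> * m)))"
proof -
  define c where "c = 2 * \<epsilon> * conj_exp q"
  have cq: "conj_exp q > 0" using assms by (simp add: conj_exp_def)
  have c0: "c \<ge> 0" using assms cq by (simp add: c_def)
  have "eventually (\<lambda>x::real. 4*((c+1)*x+2)^4 \<le> 2 powr (\<epsilon>*x)) at_top"
    using asy[OF assms(1) c0] .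
  then obtain X where X: "\<And>x. x \<ge> X \<Longrightarrow> 4*((c+1)*x+2)^4 \<le> 2 powr (\<epsilon>*x)"
    by (auto simp: eventually_at_top_linorder)
  show ?thesis
  proof (rule exI[of _ "nat \<lceil>X\<rceil>"], intro allI impI)
    fix m \<mu> \<nu>
    assume m: "nat \<lceil>X\<rceil> \<le> m"
      and H: "dyadic_measure m \<mu> \<and> dyadic_measure m \<nu> \<and>
              lqnorm m q (conv m \<mu> \<nu>) \<ge> 2 powr (- \<epsilon> * m) * lqnorm m q \<mu>"
    have "real m \<ge> X" using m by linarith
    then have big: "4 * ((2 * \<epsilon> * conj_exp q + 1) * real m + 2) ^ 4 \<le> 2 powr (\<epsilon> * real m)"
      using X by (simp add: c_def)
    show "\<exists>(j::int) (j'::int). j \<le> 2 * \<epsilon> * conj_exp q * m \<and> j' \<le> 2 * \<epsilon> * conj_exp q * m \<and>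
      (let A = {x\<in>grid m. 2 powr (- j - 1) * lqnorm m q \<mu> powr conj_exp q < \<mu> x \<and>
                          \<mu> x \<le> 2 powr (- j) * lqnorm m q \<mu> powr conj_exp q};
           B = {y\<in>grid m. 2 powr (- j' - 1) * 2 powr (- real m) < \<nu> y \<and>
                          \<nu> y \<le> 2 powr (- j') * 2 powr (- real m)}
       in lqnorm m q (conv m (indicator A) (indicator B))
            \<ge> 2 powr (- 2 * \<epsilon> * m) * lqnorm m q (indicator A) * lqnorm m 1 (indicator B)
          \<and> lqnorm m q (restr \<mu> A) \<ge> 2 powr (- 2 * \<epsilon> * m) * lqnorm m q \<mu>
          \<and> (\<Sum>y\<in>B. \<nu> y) \<ge> 2 powr (- 2 * \<epsilon> * m))"
      by (rule core[OF assms big]) (use H in auto)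
  qed
qed

end
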